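(* For all $n\ge 4$, $|F_n(321,1423,3124)|=F_n+2$, where $F_n$ is the $n$-th Fibonacci number with $F_0=F_1=1$ and $F_n=F_{n-1}+F_{n-2}$ for $n\ge 2$.
   Context: A permutation $\pi$ avoids a classical pattern $p\in S_k$ if no subsequence of $\pi$ of length $k$ is order-isomorphic to $p$. A Fishburn permutation is a permutation $\pi=\pi_1\cdots\pi_n$ of $[n]$ for which there are no indices $i<j$ with $\pi_j<\pi_i<\pi_{i+1}$ and $\pi_i=\pi_j+1$. $F_n(\sigma_1,\dots,\sigma_k)$ denotes the set of Fishburn permutations of length $n$ avoiding each of the classical patterns $\sigma_1,\dots,\sigma_k$. *)

theory Defs
  imports Main
begin

(* Permutations of [n] are represented as lists of naturals (positions 0-indexed). *)
definition is_perm :: "nat \<Rightarrow> nat list \<Rightarrow> bool" where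
  "is_perm n p \<longleftrightarrow> length p = n \<and> distinct p \<and> set p = {1..n}"

definition contains :: "nat list \<Rightarrow> nat list \<Rightarrow> bool" where
  "contains p q \<longleftrightarrow> (\<exists>idx :: nat \<Rightarrow> nat.
      (\<forall>a b. a < b \<and> b < length q \<longrightarrow> idx a < idx b) \<and>
      (\<forall>a < length q. idx a < length p) \<and>
      (\<forall>a < length q. \<forall>b < length q. (p ! idx a < p ! idx b \<longleftrightarrow> q ! a < q ! b)))"

definition avoids :: "nat list \<Rightarrow> nat list \<Rightarrow> bool" where
  "avoids p q \<longleftrightarrow> \<not> contains p q"

definition fishburn :: "nat list \<Rightarrow> bool" where
  "fishburn p \<longleftrightarrow> \<not> (\<exists>i j. i < j \<and> j < length p \<and> i + 1 < length p \<and>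
      p ! j < p ! i \<and> p ! i < p ! (i + 1) \<and> p ! i = p ! j + 1)"

definition Fish :: "nat \<Rightarrow> nat list list \<Rightarrow> nat list set" where
  "Fish n pats = {p. is_perm n p \<and> fishburn p \<and> (\<forall>q \<in> set pats. avoids p q)}"

fun F :: "nat \<Rightarrow> nat" where
  "F 0 = 1"
| "F (Suc 0) = 1"
| "F (Suc (Suc n)) = F (Suc n) + F n"

end

theory Submission imports Defs begin

lemma less3: "(a::nat) < 3 \<longleftrightarrow> a = 0 \<or> a = 1 \<or> a = 2" by auto
lemma less4: "(a::nat) < 4 \<longleftrightarrow> a = 0 \<or> a = 1 \<or> a = 2 \<or> a = 3" by auto

lemma c321: "contains p [3,2,1] \<longleftrightarrow> (\<exists>i j k. i<j \<and> j<k \<and> k<length p \<and> p!k < p!j \<and> p!j < p!i)"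
proof
  assume "contains p [3,2,1]"
  then obtain idx where h1: "\<forall>a b. a < b \<and> b < 3 \<longrightarrow> idx a < idx b"
     and h2: "\<forall>a < 3. idx a < length p"
     and h3: "\<forall>a < 3. \<forall>b < 3. (p ! idx a < p ! idx b \<longleftrightarrow> [3,2,1::nat] ! a < [3,2,1::nat] ! b)"
    unfolding contains_def by (auto simp: eval_nat_numeral)
  show "\<exists>i j k. i<j \<and> j<k \<and> k<length p \<and> p!k < p!j \<and> p!j < p!i"
    using h1[rule_format, of 0 1] h1[rule_format, of 1 2] h2[rule_format, of 2]
      h3[rule_format, of 2 1] h3[rule_format, of 1 0] by auto
next
  assume "\<exists>i j k. i<j \<and> j<k \<and> k<length p \<and> p!k < p!j \<and> p!j < p!i"
  then obtain i j k where h: "i<j" "j<k" "k<length p" "p!k < p!j" "p!j < p!i" by blast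
  show "contains p [3,2,1]" unfolding contains_def
    apply (rule exI[of _ "\<lambda>a. [i,j,k]!a"])
    using h by (auto simp: eval_nat_numeral less_Suc_eq)
qed

lemma c312: "contains p [3,1,2] \<longleftrightarrow> (\<exists>i j k. i<j \<and> j<k \<and> k<length p \<and> p!j < p!k \<and> p!k < p!i)"
proof
  assume "contains p [3,1,2]"
  then obtain idx where h1: "\<forall>a b. a < b \<and> b < 3 \<longrightarrow> idx a < idx b"
     and h2: "\<forall>a < 3. idx a < length p"
     and h3: "\<forall>a < 3. \<forall>b < 3. (p ! idx a < p ! idx b \<longleftrightarrow> [3,1,2::nat] ! a < [3,1,2::nat] ! b)"
    unfolding contains_def by (auto simp: eval_nat_numeral)
  show "\<exists>i j k. i<j \<and> j<k \<and> k<length p \<and> p!j < p!k \<and> p!k < p!i"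
    using h1[rule_format, of 0 1] h1[rule_format, of 1 2] h2[rule_format, of 2]
      h3[rule_format, of 1 2] h3[rule_format, of 2 0] by auto
next
  assume "\<exists>i j k. i<j \<and> j<k \<and> k<length p \<and> p!j < p!k \<and> p!k < p!i"
  then obtain i j k where h: "i<j" "j<k" "k<length p" "p!j < p!k" "p!k < p!i" by blast
  show "contains p [3,1,2]" unfolding contains_def
    apply (rule exI[of _ "\<lambda>a. [i,j,k]!a"])
    using h by (auto simp: eval_nat_numeral less_Suc_eq)
qed

lemma c1423: "contains p [1,4,2,3] \<longleftrightarrow> (\<exists>i j k l. i<j \<and> j<k \<and> k<l \<and> l<length p \<and> p!i < p!k \<and> p!k < p!l \<and> p!l < p!j)"
proof
  assume "contains p [1,4,2,3]"
  then obtain idx where h1: "\<forall>a b. a < b \<and> b < 4 \<longrightarrow> idx a < idx b"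
     and h2: "\<forall>a < 4. idx a < length p"
     and h3: "\<forall>a < 4. \<forall>b < 4. (p ! idx a < p ! idx b \<longleftrightarrow> [1,4,2,3::nat] ! a < [1,4,2,3::nat] ! b)"
    unfolding contains_def by (auto simp: eval_nat_numeral)
  show "\<exists>i j k l. i<j \<and> j<k \<and> k<l \<and> l<length p \<and> p!i < p!k \<and> p!k < p!l \<and> p!l < p!j"
    using h1[rule_format, of 0 1] h1[rule_format, of 1 2] h1[rule_format, of 2 3] h2[rule_format, of 3]
      h3[rule_format, of 0 2] h3[rule_format, of 2 3] h3[rule_format, of 3 1] by auto
next
  assume "\<exists>i j k l. i<j \<and> j<k \<and> k<l \<and> l<length p \<and> p!i < p!k \<and> p!k < p!l \<and> p!l < p!j"
  then obtain i j k l where h: "i<j" "j<k" "k<l" "l<length p" "p!i < p!k" "p!k < p!l" "p!l < p!j" by blast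
  show "contains p [1,4,2,3]" unfolding contains_def
    apply (rule exI[of _ "\<lambda>a. [i,j,k,l]!a"])
    using h by (auto simp: eval_nat_numeral less_Suc_eq)
qed

lemma c3124: "contains p [3,1,2,4] \<longleftrightarrow> (\<exists>i j k l. i<j \<and> j<k \<and> k<l \<and> l<length p \<and> p!j < p!k \<and> p!k < p!i \<and> p!i < p!l)"
proof
  assume "contains p [3,1,2,4]"
  then obtain idx where h1: "\<forall>a b. a < b \<and> b < 4 \<longrightarrow> idx a < idx b"
     and h2: "\<forall>a < 4. idx a < length p"
     and h3: "\<forall>a < 4. \<forall>b < 4. (p ! idx a < p ! idx b \<longleftrightarrow> [3,1,2,4::nat] ! a < [3,1,2,4::nat] ! b)"
    unfolding contains_def by (auto simp: eval_nat_numeral)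
  show "\<exists>i j k l. i<j \<and> j<k \<and> k<l \<and> l<length p \<and> p!j < p!k \<and> p!k < p!i \<and> p!i < p!l"
    using h1[rule_format, of 0 1] h1[rule_format, of 1 2] h1[rule_format, of 2 3] h2[rule_format, of 3]
      h3[rule_format, of 1 2] h3[rule_format, of 2 0] h3[rule_format, of 0 3] by auto
next
  assume "\<exists>i j k l. i<j \<and> j<k \<and> k<l \<and> l<length p \<and> p!j < p!k \<and> p!k < p!i \<and> p!i < p!l"
  then obtain i j k l where h: "i<j" "j<k" "k<l" "l<length p" "p!j < p!k" "p!k < p!i" "p!i < p!l" by blast
  show "contains p [3,1,2,4]" unfolding contains_def
    apply (rule exI[of _ "\<lambda>a. [i,j,k,l]!a"])
    using h by (auto simp: eval_nat_numeral less_Suc_eq)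
qed


definition Gat :: "nat list \<Rightarrow> nat \<Rightarrow> bool" where
  "Gat p i \<longleftrightarrow> p!i = i+1 \<or> (i+1 < length p \<and> p!i = i+2 \<and> p!(i+1) = i+1) \<or> (0<i \<and> p!i = i \<and> p!(i-1) = i+1)"

definition Lg :: "nat \<Rightarrow> nat list set" where
  "Lg n = {p. length p = n \<and> (\<forall>i<n. Gat p i)}"

lemma Gat_bounds: "Gat p i \<Longrightarrow> i \<le> p!i \<and> p!i \<le> i+2"
  by (auto simp: Gat_def)

lemma Gat_app: "Gat q i \<Longrightarrow> i < length q \<Longrightarrow> Gat (q@s) i"
  by (auto simp: Gat_def nth_append)

lemma split_last1: "length p = Suc m \<Longrightarrow> p = take m p @ [p!m]"
  by (metis lessI take_Suc_conv_app_nth take_all order_refl)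

lemma split_last2: "length p = Suc (Suc m) \<Longrightarrow> p = take m p @ [p!m, p!(Suc m)]"
  by (metis Suc_lessD append.assoc append_Cons append_Nil lessI take_Suc_conv_app_nth split_last1)

lemma Lg_rec: "Lg (Suc (Suc n)) = (\<lambda>q. q@[n+2]) ` Lg (Suc n) \<union> (\<lambda>q. q@[n+2,n+1]) ` Lg n"
proof
  show "Lg (Suc (Suc n)) \<subseteq> (\<lambda>q. q@[n+2]) ` Lg (Suc n) \<union> (\<lambda>q. q@[n+2,n+1]) ` Lg n"
  proof
    fix p assume p: "p \<in> Lg (Suc (Suc n))"
    hence len: "length p = Suc (Suc n)" and G: "\<And>i. i < Suc (Suc n) \<Longrightarrow> Gat p i" by (auto simp: Lg_def)
    have "Gat p (Suc n)" using G by simp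
    hence "p!(Suc n) = n+2 \<or> (p!(Suc n) = n+1 \<and> p!n = n+2)" using len by (auto simp: Gat_def)
    thus "p \<in> (\<lambda>q. q@[n+2]) ` Lg (Suc n) \<union> (\<lambda>q. q@[n+2,n+1]) ` Lg n"
    proof
      assume a: "p!(Suc n) = n+2"
      have "take (Suc n) p \<in> Lg (Suc n)"
        unfolding Lg_def
      proof (intro CollectI conjI allI impI)
        show "length (take (Suc n) p) = Suc n" using len by simp
        fix i assume i: "i < Suc n"
        have "Gat p i" using G i by simp
        thus "Gat (take (Suc n) p) i" using i a len by (cases "i = n") (auto simp: Gat_def)
      qed
      moreover have "p = take (Suc n) p @ [n+2]" using split_last1[OF len] a by simp
      ultimately show ?thesis by blast
    next
      assume a: "p!(Suc n) = n+1 \<and> p!n = n+2"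
      have "take n p \<in> Lg n"
        unfolding Lg_def
      proof (intro CollectI conjI allI impI)
        show "length (take n p) = n" using len by simp
        fix i assume i: "i < n"
        have "Gat p i" using G i by simp
        thus "Gat (take n p) i" using i a len by (cases "Suc i = n") (auto simp: Gat_def)
      qed
      moreover have "p = take n p @ [n+2, n+1]" using split_last2[OF len] a by simp
      ultimately show ?thesis by blast
    qed
  qed
next
  show "(\<lambda>q. q@[n+2]) ` Lg (Suc n) \<union> (\<lambda>q. q@[n+2,n+1]) ` Lg n \<subseteq> Lg (Suc (Suc n))"
  proof
    fix p assume "p \<in> (\<lambda>q. q@[n+2]) ` Lg (Suc n) \<union> (\<lambda>q. q@[n+2,n+1]) ` Lg n"
    thus "p \<in> Lg (Suc (Suc n))"
    proof
      assume "p \<in> (\<lambda>q. q@[n+2]) ` Lg (Suc n)"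
      then obtain q where q: "q \<in> Lg (Suc n)" and pq: "p = q@[n+2]" by blast
      have lq: "length q = Suc n" and Gq: "\<And>i. i < Suc n \<Longrightarrow> Gat q i" using q by (auto simp: Lg_def)
      show ?thesis unfolding Lg_def
      proof (intro CollectI conjI allI impI)
        show "length p = Suc (Suc n)" using pq lq by simp
        fix i assume i: "i < Suc (Suc n)"
        show "Gat p i"
        proof (cases "i < Suc n")
          case True thus ?thesis using Gat_app[OF Gq[OF True]] lq pq by simp
        next
          case False hence "i = Suc n" using i by simp
          thus ?thesis using pq lq by (simp add: Gat_def nth_append)
        qed
      qed
    next
      assume "p \<in> (\<lambda>q. q@[n+2,n+1]) ` Lg n"
      then obtain q where q: "q \<in> Lg n" and pq: "p = q@[n+2,n+1]" by blast
      have lq: "length q = n" and Gq: "\<And>i. i < n \<Longrightarrow> Gat q i" using q by (auto simp: Lg_def)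
      show ?thesis unfolding Lg_def
      proof (intro CollectI conjI allI impI)
        show "length p = Suc (Suc n)" using pq lq by simp
        fix i assume i: "i < Suc (Suc n)"
        show "Gat p i"
        proof (cases "i < n")
          case True thus ?thesis using Gat_app[OF Gq[OF True]] lq pq by simp
        next
          case False hence "i = n \<or> i = Suc n" using i by auto
          thus ?thesis using pq lq by (auto simp add: Gat_def nth_append)
        qed
      qed
    qed
  qed
qed

lemma Lg0: "Lg 0 = {[]}" by (auto simp: Lg_def)
lemma Lg1: "Lg (Suc 0) = {[1]}"
proof -
  have "p = [1]" if "length p = Suc 0" "Gat p 0" for p
    using that by (cases p) (auto simp: Gat_def)
  thus ?thesis by (auto simp: Lg_def Gat_def)
qed

lemma Lg_card: "finite (Lg n) \<and> card (Lg n) = F n"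
proof (induction n rule: F.induct)
  case 1 thus ?case by (simp add: Lg0)
next
  case 2 thus ?case by (simp add: Lg1)
next
  case (3 n)
  have inj1: "inj_on (\<lambda>q. q@[n+2]) (Lg (Suc n))" by (auto simp: inj_on_def)
  have inj2: "inj_on (\<lambda>q. q@[n+2,n+1]) (Lg n)" by (auto simp: inj_on_def)
  have disj: "(\<lambda>q. q@[n+2]) ` Lg (Suc n) \<inter> (\<lambda>q. q@[n+2,n+1]) ` Lg n = {}"
  proof -
    have "q@[n+2] \<noteq> r@[n+2,n+1]" for q r
    proof
      assume "q@[n+2] = r@[n+2,n+1]"
      hence "last (q@[n+2]) = last (r@[n+2,n+1])" by simp
      thus False by simp
    qed
    thus ?thesis by blast
  qed
  have f1: "finite (Lg (Suc n))" and f2: "finite (Lg n)" using 3 by auto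
  have "card ((\<lambda>q. q@[n+2]) ` Lg (Suc n) \<union> (\<lambda>q. q@[n+2,n+1]) ` Lg n)
     = card ((\<lambda>q. q@[n+2]) ` Lg (Suc n)) + card ((\<lambda>q. q@[n+2,n+1]) ` Lg n)"
    by (rule card_Un_disjoint[OF finite_imageI[OF f1] finite_imageI[OF f2] disj])
  also have "\<dots> = card (Lg (Suc n)) + card (Lg n)"
    using card_image[OF inj1] card_image[OF inj2] by (simp only:)
  also have "\<dots> = F (Suc (Suc n))" using 3 by simp
  finally show ?case using f1 f2 unfolding Lg_rec by simp
qed

lemma Lg_perm: "p \<in> Lg n \<Longrightarrow> is_perm n p"
proof (induction n arbitrary: p rule: F.induct)
  case 1 thus ?case by (simp add: Lg0 is_perm_def)
next
  case 2 thus ?case by (simp add: Lg1 is_perm_def)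
next
  case (3 n)
  from "3.prems" consider (a) q where "q \<in> Lg (Suc n)" "p = q@[n+2]" | (b) q where "q \<in> Lg n" "p = q@[n+2,n+1]"
    unfolding Lg_rec by blast
  thus ?case
  proof cases
    case a
    have "is_perm (Suc n) q" using 3(1) a by blast
    thus ?thesis using a by (auto simp: is_perm_def)
  next
    case b
    have "is_perm n q" using 3(2) b by blast
    thus ?thesis using b by (auto simp: is_perm_def)
  qed
qed


lemma Lg_good:
  assumes "p \<in> Lg n"
  shows "\<not> contains p [3,2,1] \<and> \<not> contains p [3,1,2] \<and> \<not> contains p [1,4,2,3] \<and> \<not> contains p [3,1,2,4] \<and> fishburn p"
proof -
  have len: "length p = n" and G: "\<And>i. i < n \<Longrightarrow> Gat p i" using assms by (auto simp: Lg_def)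
  have B: "\<And>i. i < n \<Longrightarrow> i \<le> p!i \<and> p!i \<le> i+2" using G Gat_bounds by blast
  have n312: "\<not> contains p [3,1,2]"
  proof
    assume "contains p [3,1,2]"
    then obtain i j k where h: "i<j" "j<k" "k<length p" "p!j < p!k" "p!k < p!i" unfolding c312 by blast
    thus False using B[of i] B[of j] B[of k] len by auto
  qed
  have n321: "\<not> contains p [3,2,1]"
  proof
    assume "contains p [3,2,1]"
    then obtain i j k where h: "i<j" "j<k" "k<length p" "p!k < p!j" "p!j < p!i" unfolding c321 by blast
    thus False using B[of i] B[of j] B[of k] len by auto
  qed
  have n1423: "\<not> contains p [1,4,2,3]"
  proof
    assume "contains p [1,4,2,3]"
    then obtain i j k l where h: "i<j" "j<k" "k<l" "l<length p" "p!i < p!k" "p!k < p!l" "p!l < p!j" unfolding c1423 by blast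
    hence "contains p [3,1,2]" unfolding c312 by (intro exI[of _ j] exI[of _ k] exI[of _ l]) auto
    thus False using n312 by simp
  qed
  have n3124: "\<not> contains p [3,1,2,4]"
  proof
    assume "contains p [3,1,2,4]"
    then obtain i j k l where h: "i<j" "j<k" "k<l" "l<length p" "p!j < p!k" "p!k < p!i" "p!i < p!l" unfolding c3124 by blast
    hence "contains p [3,1,2]" unfolding c312 by (intro exI[of _ i] exI[of _ j] exI[of _ k]) auto
    thus False using n312 by simp
  qed
  have fb: "fishburn p"
    unfolding fishburn_def
  proof
    assume "\<exists>i j. i < j \<and> j < length p \<and> i + 1 < length p \<and>
      p ! j < p ! i \<and> p ! i < p ! (i + 1) \<and> p ! i = p ! j + 1"
    then obtain i j where h: "i < j" "j < length p" "i + 1 < length p"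
      "p ! j < p ! i" "p ! i < p ! (i + 1)" "p ! i = p ! j + 1" by blast
    have "Gat p i" using G h len by simp
    thus False using B[of j] h len unfolding Gat_def by auto
  qed
  show ?thesis using n312 n321 n1423 n3124 fb by blast
qed

lemma val_pos:
  assumes "set p = {1..n}" "length p = n" "1 \<le> v" "v \<le> n"
  obtains j where "j < n" "p!j = v"
proof -
  have "v \<in> set p" using assms by auto
  thus ?thesis using that assms(2) by (metis in_set_conv_nth)
qed

lemma K1:
  assumes len: "length p = n" and dist: "distinct p" and st: "set p = {1..n}"
    and fb: "fishburn p" and n321: "\<not> contains p [3,2,1]" and n312: "\<not> contains p [3,1,2]"
  shows "i \<le> n \<Longrightarrow> (\<forall>t<i. Gat p t) \<Longrightarrow> (\<forall>t<n. t<i \<longleftrightarrow> p!t \<le> i) \<Longrightarrow> \<forall>t<n. Gat p t"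
proof (induction "n - i" arbitrary: i rule: less_induct)
  case less
  have D: "\<And>s t. s < n \<Longrightarrow> t < n \<Longrightarrow> p!s = p!t \<Longrightarrow> s = t" using dist len nth_eq_iff_index_eq by blast
  have r321: "\<And>i j k. i<j \<Longrightarrow> j<k \<Longrightarrow> k<n \<Longrightarrow> p!k < p!j \<Longrightarrow> p!j < p!i \<Longrightarrow> False"
    using n321 len unfolding c321 by blast
  have r312: "\<And>i j k. i<j \<Longrightarrow> j<k \<Longrightarrow> k<n \<Longrightarrow> p!j < p!k \<Longrightarrow> p!k < p!i \<Longrightarrow> False"
    using n312 len unfolding c312 by blast
  have rfb: "\<And>i j. i<j \<Longrightarrow> j<n \<Longrightarrow> i+1<n \<Longrightarrow> p!j < p!i \<Longrightarrow> p!i < p!(i+1) \<Longrightarrow> p!i = p!j+1 \<Longrightarrow> False"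
    using fb len unfolding fishburn_def by blast
  show ?case
  proof (cases "i = n")
    case True thus ?thesis using less.prems by simp
  next
    case False
    hence iN: "i < n" using less.prems by simp
    have pi: "p!i > i" using less.prems(3) iN by auto
    obtain j where j: "j < n" "p!j = i+1" using val_pos[OF st len, of "i+1"] iN by auto
    have ji: "j \<ge> i"
    proof (rule ccontr)
      assume "\<not> j \<ge> i" hence "p!j \<le> i" using less.prems(3) j by auto
      thus False using j by simp
    qed
    have pin: "p!i \<le> n" using st len iN nth_mem by fastforce
    show ?thesis
    proof (cases "p!i = i+1")
      case True
      have "\<forall>t<n. Gat p t"
      proof (rule less.hyps[of "i+1"])
        show "n - (i+1) < n - i" using iN by simp
        show "i+1 \<le> n" using iN by simp
        show "\<forall>t<i+1. Gat p t" using less.prems(2) True by (auto simp: Gat_def less_Suc_eq)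
        show "\<forall>t<n. t<i+1 \<longleftrightarrow> p!t \<le> i+1"
        proof (intro allI impI)
          fix t assume t: "t < n"
          show "t<i+1 \<longleftrightarrow> p!t \<le> i+1"
          proof
            assume "t < i+1" thus "p!t \<le> i+1" using less.prems(3) t True by (auto simp: less_Suc_eq)
          next
            assume "p!t \<le> i+1"
            hence "p!t \<le> i \<or> p!t = p!i" using True by auto
            thus "t < i+1" using less.prems(3) t D[OF t iN] by auto
          qed
        qed
      qed
      thus ?thesis .
    next
      case False
      have pi2: "p!i \<ge> i+2" using pi False by simp
      have jgt: "j > i" using ji False j by (metis le_neq_implies_less)
      have pieq: "p!i = i+2"
      proof (rule ccontr)
        assume "p!i \<noteq> i+2"
        hence pi3: "p!i \<ge> i+3" using pi2 by simp
        obtain j' where j': "j' < n" "p!j' = i+2" using val_pos[OF st len, of "i+2"] pi3 pin by auto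
        have "j' \<noteq> i" using j' \<open>p!i \<noteq> i+2\<close> by auto
        moreover have "j' \<ge> i"
        proof (rule ccontr)
          assume "\<not> j' \<ge> i" hence "p!j' \<le> i" using less.prems(3) j' by auto
          thus False using j' by simp
        qed
        moreover have "j' \<noteq> j" using j j' by auto
        ultimately consider "j < j'" | "j' < j" by linarith
        thus False
        proof cases
          case 1 thus False using r312[of i j j'] jgt j j' pi3 by auto
        next
          case 2 thus False using r321[of i j' j] \<open>j' \<ge> i\<close> \<open>j' \<noteq> i\<close> j j' pi3 by auto
        qed
      qed
      show ?thesis
      proof (cases "j = i+1")
        case True
        have "\<forall>t<n. Gat p t"
        proof (rule less.hyps[of "i+2"])
          show "n - (i+2) < n - i" using iN by simp
          show "i+2 \<le> n" using j True by simp
          show "\<forall>t<i+2. Gat p t"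
          proof (intro allI impI)
            fix t assume "t < i+2"
            hence "t < i \<or> t = i \<or> t = i+1" by auto
            thus "Gat p t" using less.prems(2) pieq True j len by (auto simp: Gat_def)
          qed
          show "\<forall>t<n. t<i+2 \<longleftrightarrow> p!t \<le> i+2"
          proof (intro allI impI)
            fix t assume t: "t < n"
            show "t<i+2 \<longleftrightarrow> p!t \<le> i+2"
            proof
              assume "t < i+2"
              hence "t < i \<or> t = i \<or> t = i+1" by auto
              thus "p!t \<le> i+2" using less.prems(3) t pieq True j by auto
            next
              assume "p!t \<le> i+2"
              hence "p!t \<le> i \<or> p!t = p!i \<or> p!t = p!j" using pieq j by auto
              thus "t < i+2" using less.prems(3) t D[OF t iN] D[OF t j(1)] True by auto
            qed
          qed
        qed
        thus ?thesis .
      next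
        case False
        hence ji2: "j > i+1" using jgt by simp
        have i1n: "i+1 < n" using ji2 j by simp
        have "\<not> p!(i+1) \<le> i" using less.prems(3) i1n by auto
        moreover have "p!(i+1) \<noteq> i+1" using D[OF i1n j(1)] j False by auto
        moreover have "p!(i+1) \<noteq> i+2" using D[OF i1n iN] pieq by auto
        ultimately have "p!(i+1) > p!i" using pieq by auto
        thus ?thesis using rfb[of i j] ji2 j i1n pieq by auto
      qed
    qed
  qed
qed


lemma incr_fill:
  fixes f :: "nat \<Rightarrow> nat"
  assumes inc: "\<And>s t. lo \<le> s \<Longrightarrow> s < t \<Longrightarrow> t < hi \<Longrightarrow> f s < f t"
    and rng: "\<And>t. lo \<le> t \<Longrightarrow> t < hi \<Longrightarrow> c \<le> f t \<and> f t < c + (hi - lo)"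
    and t: "lo \<le> t" "t < hi"
  shows "f t = c + (t - lo)"
proof -
  have low: "lo + d < hi \<Longrightarrow> f (lo + d) \<ge> c + d" for d
  proof (induction d)
    case 0 thus ?case using rng[of lo] by simp
  next
    case (Suc d)
    have "f (lo + d) < f (lo + Suc d)" using inc[of "lo+d" "lo + Suc d"] Suc.prems by simp
    thus ?case using Suc by simp
  qed
  have up: "d < hi - lo \<Longrightarrow> f (hi - 1 - d) + d < c + (hi - lo)" for d
  proof (induction d)
    case 0 thus ?case using rng[of "hi - 1"] by simp
  next
    case (Suc d)
    have "f (hi - 1 - Suc d) < f (hi - 1 - d)" using inc[of "hi - 1 - Suc d" "hi - 1 - d"] Suc.prems by simp
    thus ?case using Suc by simp
  qed
  have "f (lo + (t - lo)) \<ge> c + (t - lo)" using low[of "t - lo"] t by simp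
  moreover have "f (hi - 1 - (hi - 1 - t)) + (hi - 1 - t) < c + (hi - lo)" using up[of "hi - 1 - t"] t by simp
  ultimately show ?thesis using t by simp
qed

definition an :: "nat \<Rightarrow> nat list" where "an n = n # [1..<n]"
definition bn :: "nat \<Rightarrow> nat list" where "bn n = [3,1] @ [4..<n+1] @ [2]"

lemma an_len: "n \<ge> 1 \<Longrightarrow> length (an n) = n" by (simp add: an_def)
lemma an_nth: "t < n \<Longrightarrow> an n ! t = (if t = 0 then n else t)"
  by (cases t) (auto simp: an_def)
lemma bn_len: "n \<ge> 4 \<Longrightarrow> length (bn n) = n" by (simp add: bn_def)
lemma bn_nth: "n \<ge> 4 \<Longrightarrow> t < n \<Longrightarrow> bn n ! t = (if t = 0 then 3 else if t = 1 then 1 else if t = n - 1 then 2 else t + 2)"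
  by (auto simp: bn_def nth_append nth_Cons' )


lemma an_good:
  assumes n: "n \<ge> 4"
  shows "is_perm n (an n) \<and> fishburn (an n) \<and> \<not> contains (an n) [3,2,1] \<and> \<not> contains (an n) [1,4,2,3] \<and> \<not> contains (an n) [3,1,2,4]"
proof (intro conjI)
  have L: "length (an n) = n" using n by (simp add: an_def)
  show "is_perm n (an n)" using n by (auto simp: is_perm_def an_def)
  show "fishburn (an n)" unfolding fishburn_def
  proof
    assume "\<exists>i j. i < j \<and> j < length (an n) \<and> i + 1 < length (an n) \<and>
      an n ! j < an n ! i \<and> an n ! i < an n ! (i + 1) \<and> an n ! i = an n ! j + 1"
    then obtain i j where h: "i < j" "j < n" "i + 1 < n"
      "an n ! j < an n ! i" "an n ! i < an n ! (i + 1)" "an n ! i = an n ! j + 1" using L by auto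
    thus False using an_nth[of i n] an_nth[of j n] an_nth[of "i+1" n] by (auto split: if_splits)
  qed
  show "\<not> contains (an n) [3,2,1]"
  proof
    assume "contains (an n) [3,2,1]"
    then obtain i j k where h: "i<j" "j<k" "k<n" "an n!k < an n!j" "an n!j < an n!i" unfolding c321 L by blast
    thus False using an_nth[of i n] an_nth[of j n] an_nth[of k n] by (auto split: if_splits)
  qed
  show "\<not> contains (an n) [1,4,2,3]"
  proof
    assume "contains (an n) [1,4,2,3]"
    then obtain i j k l where h: "i<j" "j<k" "k<l" "l<n" "an n!i < an n!k" "an n!k < an n!l" "an n!l < an n!j" unfolding c1423 L by blast
    thus False using an_nth[of i n] an_nth[of j n] an_nth[of k n] an_nth[of l n] by (auto split: if_splits)
  qed
  show "\<not> contains (an n) [3,1,2,4]"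
  proof
    assume "contains (an n) [3,1,2,4]"
    then obtain i j k l where h: "i<j" "j<k" "k<l" "l<n" "an n!j < an n!k" "an n!k < an n!i" "an n!i < an n!l" unfolding c3124 L by blast
    thus False using an_nth[of i n] an_nth[of j n] an_nth[of k n] an_nth[of l n] by (auto split: if_splits)
  qed
qed

lemma bn_good:
  assumes n: "n \<ge> 4"
  shows "is_perm n (bn n) \<and> fishburn (bn n) \<and> \<not> contains (bn n) [3,2,1] \<and> \<not> contains (bn n) [1,4,2,3] \<and> \<not> contains (bn n) [3,1,2,4]"
proof (intro conjI)
  have L: "length (bn n) = n" using n by (simp add: bn_def)
  show "is_perm n (bn n)" using n by (auto simp: is_perm_def bn_def)
  show "fishburn (bn n)" unfolding fishburn_def
  proof
    assume "\<exists>i j. i < j \<and> j < length (bn n) \<and> i + 1 < length (bn n) \<and>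
      bn n ! j < bn n ! i \<and> bn n ! i < bn n ! (i + 1) \<and> bn n ! i = bn n ! j + 1"
    then obtain i j where h: "i < j" "j < n" "i + 1 < n"
      "bn n ! j < bn n ! i" "bn n ! i < bn n ! (i + 1)" "bn n ! i = bn n ! j + 1" using L by auto
    thus False using bn_nth[OF n, of i] bn_nth[OF n, of j] bn_nth[OF n, of "i+1"] by (auto split: if_splits)
  qed
  show "\<not> contains (bn n) [3,2,1]"
  proof
    assume "contains (bn n) [3,2,1]"
    then obtain i j k where h: "i<j" "j<k" "k<n" "bn n!k < bn n!j" "bn n!j < bn n!i" unfolding c321 L by blast
    thus False using bn_nth[OF n, of i] bn_nth[OF n, of j] bn_nth[OF n, of k] by (auto split: if_splits)
  qed
  show "\<not> contains (bn n) [1,4,2,3]"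
  proof
    assume "contains (bn n) [1,4,2,3]"
    then obtain i j k l where h: "i<j" "j<k" "k<l" "l<n" "bn n!i < bn n!k" "bn n!k < bn n!l" "bn n!l < bn n!j" unfolding c1423 L by blast
    thus False using bn_nth[OF n, of i] bn_nth[OF n, of j] bn_nth[OF n, of k] bn_nth[OF n, of l] by (auto split: if_splits)
  qed
  show "\<not> contains (bn n) [3,1,2,4]"
  proof
    assume "contains (bn n) [3,1,2,4]"
    then obtain i j k l where h: "i<j" "j<k" "k<l" "l<n" "bn n!j < bn n!k" "bn n!k < bn n!i" "bn n!i < bn n!l" unfolding c3124 L by blast
    thus False using bn_nth[OF n, of i] bn_nth[OF n, of j] bn_nth[OF n, of k] bn_nth[OF n, of l] by (auto split: if_splits)
  qed
qed


lemma K2: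
  assumes len: "length p = n" and dist: "distinct p" and st: "set p = {1..n}"
    and fb: "fishburn p" and n321: "\<not> contains p [3,2,1]" and n1423: "\<not> contains p [1,4,2,3]"
    and n3124: "\<not> contains p [3,1,2,4]"
    and h: "i<j" "j<k" "k<n" "p!j < p!k" "p!k < p!i"
  shows "p = an n \<or> p = bn n"
proof -
  have D: "\<And>s t. s < n \<Longrightarrow> t < n \<Longrightarrow> p!s = p!t \<Longrightarrow> s = t" using dist len nth_eq_iff_index_eq by blast
  have V: "\<And>t. t < n \<Longrightarrow> 1 \<le> p!t \<and> p!t \<le> n" using st len nth_mem by fastforce
  have r321: "\<And>i j k. i<j \<Longrightarrow> j<k \<Longrightarrow> k<n \<Longrightarrow> p!k < p!j \<Longrightarrow> p!j < p!i \<Longrightarrow> False"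
    using n321 len unfolding c321 by blast
  have r1423: "\<And>i j k l. i<j \<Longrightarrow> j<k \<Longrightarrow> k<l \<Longrightarrow> l<n \<Longrightarrow> p!i < p!k \<Longrightarrow> p!k < p!l \<Longrightarrow> p!l < p!j \<Longrightarrow> False"
    using n1423 len unfolding c1423 by blast
  have r3124: "\<And>i j k l. i<j \<Longrightarrow> j<k \<Longrightarrow> k<l \<Longrightarrow> l<n \<Longrightarrow> p!j < p!k \<Longrightarrow> p!k < p!i \<Longrightarrow> p!i < p!l \<Longrightarrow> False"
    using n3124 len unfolding c3124 by blast
  have rfb: "\<And>i j. i<j \<Longrightarrow> j<n \<Longrightarrow> i+1<n \<Longrightarrow> p!j < p!i \<Longrightarrow> p!i < p!(i+1) \<Longrightarrow> p!i = p!j+1 \<Longrightarrow> False"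
    using fb len unfolding fishburn_def by blast
  have P: "\<And>v. 1 \<le> v \<Longrightarrow> v \<le> n \<Longrightarrow> \<exists>y<n. p!y = v" using val_pos[OF st len] by metis
  have jn: "j < n" "i < n" using h by auto
  have bef1: "p!t < p!i" if "t < i" for t
  proof -
    have "p!t \<noteq> p!i" using D[of t i] that jn by auto
    moreover have "\<not> p!t > p!i" using r321[of t i j] that h by auto
    ultimately show ?thesis by simp
  qed
  have bef2: "p!t > p!j" if "t < i" for t
  proof -
    have "p!t \<noteq> p!j" using D[of t j] that jn h by auto
    moreover have "\<not> p!t < p!j" using r1423[of t i j k] that h by auto
    ultimately show ?thesis by simp
  qed
  have i0: "i = 0"
  proof (rule ccontr)
    assume "i \<noteq> 0"
    hence ip: "0 < i" by simp
    have m: "p!0 < p!t" if "0 < t" "t < i" for t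
    proof -
      have "p!0 \<noteq> p!t" using D[of 0 t] that jn by auto
      moreover have "\<not> p!0 > p!t" using r321[of 0 t j] that h bef2[of t] by auto
      ultimately show ?thesis by simp
    qed
    have v2: "p!0 \<ge> 2" using bef2[OF ip] V[of j] jn by simp
    have "\<exists>y<n. p!y = p!0 - 1" using P[of "p!0 - 1"] v2 V[of 0] jn by simp
    then obtain y where y: "y < n" "p!y = p!0 - 1" by blast
    have "y \<noteq> 0"
    proof
      assume "y = 0" thus False using y v2 by simp
    qed
    moreover have "\<not> y < i" using m[of y] y \<open>y \<noteq> 0\<close> by auto
    moreover have "y \<noteq> i" using y bef1[OF ip] by auto
    ultimately have yi: "y > i" by simp
    have p1: "p!1 > p!0"
    proof (cases "1 < i")
      case True thus ?thesis using m[of 1] by simp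
    next
      case False hence "i = 1" using ip by simp
      thus ?thesis using bef1[OF ip] by simp
    qed
    have q1: "p!y < p!0" "p!0 = p!y + 1" using y v2 by simp_all
    show False by (rule rfb[of 0 y]) (use yi y(1) p1 q1 ip jn in simp_all)
  qed
  define a where "a = p!0"
  have F1: "p!s < p!t" if "0 < s" "s < t" "t < n" "p!s < a" "p!t < a" for s t
  proof -
    have "p!s \<noteq> p!t" using D[of s t] that by auto
    moreover have "\<not> p!s > p!t" using r321[of 0 s t] that a_def by auto
    ultimately show ?thesis by simp
  qed
  have a3: "a \<ge> 3" using h V[of j] jn i0 a_def by simp
  have n2: "1 < n" using h i0 by simp
  have p1a: "p!1 < a"
  proof -
    have "\<exists>y<n. p!y = a - 1" by (rule P) (use a3 V[of 0] jn a_def in auto)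
    then obtain y where y: "y < n" "p!y = a - 1" by blast
    have "y \<noteq> 0"
    proof
      assume "y = 0" thus False using y a_def a3 by simp
    qed
    have "p!1 \<noteq> a" using D[of 1 0] n2 a_def by auto
    moreover have "\<not> p!1 > a"
    proof
      assume "p!1 > a"
      have q1: "p!y < p!0" "p!0 = p!y + 1" using y a3 a_def by simp_all
      show False by (rule rfb[of 0 y]) (use y(1) \<open>y \<noteq> 0\<close> q1 \<open>p!1 > a\<close> n2 a_def in simp_all)
    qed
    ultimately show ?thesis by simp
  qed
  have p11: "p!1 = 1"
  proof -
    have "\<exists>y<n. p!y = 1" by (rule P) (use n2 in auto)
    then obtain y where y: "y < n" "p!y = 1" by blast
    have "y \<noteq> 0"
    proof
      assume "y = 0" thus False using y a_def a3 by simp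
    qed
    have "\<not> y > 1" using F1[of 1 y] y p1a a3 V[of 1] n2 by auto
    hence "y = 1" using \<open>y \<noteq> 0\<close> by simp
    thus ?thesis using y by simp
  qed
  have "\<exists>y<n. p!y = 2" by (rule P) (use a3 V[of 0] jn a_def in auto)
  then obtain y2 where y2: "y2 < n" "p!y2 = 2" by blast
  have "y2 \<noteq> 0"
  proof
    assume "y2 = 0" thus False using y2 a_def a3 by simp
  qed
  moreover have "y2 \<noteq> 1"
  proof
    assume "y2 = 1" thus False using y2 p11 by simp
  qed
  ultimately have y2ge: "y2 \<ge> 2" by simp
  show ?thesis
  proof (cases "y2 = 2")
    case True
    have lt: "p!t < a" if "1 \<le> t" "t < n" for t
    proof -
      have "p!t \<noteq> a" using D[of t 0] that a_def by auto
      moreover have "\<not> p!t > a"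
      proof
        assume pt: "p!t > a"
        have "t \<noteq> 1" using pt p11 a3 by auto
        moreover have "t \<noteq> 2" using pt y2 True a3 by auto
        ultimately have "t \<ge> 3" using that by simp
        thus False using r3124[of 0 1 2 t] pt p11 y2 True a3 that a_def by auto
      qed
      ultimately show ?thesis by simp
    qed
    have val: "p!t = 1 + (t - 1)" if "1 \<le> t" "t < n" for t
    proof (rule incr_fill[where f = "\<lambda>t. p!t" and lo = 1 and hi = n and c = 1])
      show "\<And>s t. 1 \<le> s \<Longrightarrow> s < t \<Longrightarrow> t < n \<Longrightarrow> p!s < p!t"
      proof -
        fix s t assume st: "1 \<le> s" "s < t" "t < n"
        show "p!s < p!t" using F1[of s t] lt[of s] lt[of t] st by simp
      qed
      show "\<And>t. 1 \<le> t \<Longrightarrow> t < n \<Longrightarrow> 1 \<le> p!t \<and> p!t < 1 + (n - 1)"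
      proof -
        fix t assume tt: "1 \<le> t" "t < n"
        show "1 \<le> p!t \<and> p!t < 1 + (n - 1)" using lt[OF tt] V[OF tt(2)] V[of 0] jn a_def by linarith
      qed
    qed (use that in auto)
    have "a = n"
    proof -
      have "p!(n-1) = n - 1" using val[of "n-1"] n2 by simp
      hence "n - 1 < a" using lt[of "n-1"] n2 by simp
      thus ?thesis using V[of 0] jn a_def by simp
    qed
    have "p = an n"
    proof (rule nth_equalityI)
      show "length p = length (an n)" using len n2 by (simp add: an_def)
      fix t assume "t < length p"
      thus "p!t = an n!t" using val[of t] an_nth[of t n] len \<open>a = n\<close> a_def by (cases "t = 0") auto
    qed
    thus ?thesis by simp
  next
    case False
    hence y2g: "y2 > 2" using y2ge by simp
    have n3: "2 < n" using y2g y2 by simp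
    have p2: "p!2 > a"
    proof -
      have "p!2 \<noteq> a" using D[of 2 0] n3 a_def by auto
      moreover have "p!2 \<noteq> 1" using D[of 2 1] n3 p11 by auto
      moreover have "p!2 \<noteq> 2" using D[of 2 y2] n3 y2 False by auto
      moreover have "\<not> p!2 < a" using F1[of 2 y2] y2g y2 a3 V[of 2] n3 \<open>p!2 \<noteq> 1\<close> by auto
      ultimately show ?thesis by simp
    qed
    have aeq: "a = 3"
    proof (rule ccontr)
      assume "a \<noteq> 3"
      hence a4: "a \<ge> 4" using a3 by simp
      have "\<exists>y<n. p!y = 3" by (rule P) (use a4 V[of 0] jn a_def in auto)
      then obtain y3 where y3: "y3 < n" "p!y3 = 3" by blast
      have "y3 \<noteq> 0"
      proof
        assume "y3 = 0" thus False using y3 a_def a4 by simp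
      qed
      have "y3 \<noteq> 1" using y3 p11 by auto
      have "y3 \<noteq> 2" using y3 p2 a4 by auto
      have "y3 \<noteq> y2" using y3 y2 by auto
      have "\<not> y3 < y2" using F1[of y3 y2] y3 y2 a4 \<open>y3 \<noteq> 0\<close> by auto
      hence "y3 > y2" using \<open>y3 \<noteq> y2\<close> by simp
      thus False using r1423[of 1 2 y2 y3] y2g y3 y2 p11 p2 a4 by auto
    qed
    have y2n: "y2 = n - 1"
    proof (rule ccontr)
      assume "y2 \<noteq> n - 1"
      hence yn: "y2 + 1 < n" using y2 by simp
      have "p!(y2+1) \<noteq> 1" using D[of "y2+1" 1] yn p11 y2g by auto
      moreover have "p!(y2+1) \<noteq> 2" using D[of "y2+1" y2] yn y2 by auto
      moreover have "p!(y2+1) \<noteq> 3" using D[of "y2+1" 0] yn aeq a_def by auto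
      ultimately have "p!(y2+1) > 3" using V[of "y2+1"] yn by auto
      thus False using r3124[of 0 1 y2 "y2+1"] y2g yn y2 p11 aeq a_def by auto
    qed
    have n4: "n \<ge> 4" using y2n y2g by simp
    have big: "4 \<le> p!t \<and> p!t \<le> n" if "2 \<le> t" "t < n - 1" for t
    proof -
      have tn: "t < n" "1 < n" "0 < n" using that by auto
      have "p!t \<noteq> 1" using D[of t 1] that tn p11 by auto
      moreover have "p!t \<noteq> 2" using D[of t y2] that tn y2 y2n by auto
      moreover have "p!t \<noteq> 3" using D[of t 0] that tn aeq a_def by auto
      ultimately show ?thesis using V[of t] tn by auto
    qed
    have val: "p!t = 4 + (t - 2)" if "2 \<le> t" "t < n - 1" for t
    proof (rule incr_fill[where f = "\<lambda>t. p!t" and lo = 2 and hi = "n - 1" and c = 4])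
      show "\<And>s t. 2 \<le> s \<Longrightarrow> s < t \<Longrightarrow> t < n - 1 \<Longrightarrow> p!s < p!t"
      proof -
        fix s t assume st: "2 \<le> s" "s < t" "t < n - 1"
        have sn: "s < n" "t < n" using st by auto
        have "p!s \<noteq> p!t" using D[OF sn] st by auto
        moreover have "\<not> p!s > p!t" using r321[of s t y2] st y2 y2n big[of t] by auto
        ultimately show "p!s < p!t" by simp
      qed
      show "\<And>t. 2 \<le> t \<Longrightarrow> t < n - 1 \<Longrightarrow> 4 \<le> p!t \<and> p!t < 4 + (n - 1 - 2)"
        using big n4 by fastforce
    qed (use that in auto)
    have "p = bn n"
    proof (rule nth_equalityI)
      show "length p = length (bn n)" using len n4 by (simp add: bn_def)
      fix t assume "t < length p"
      hence t: "t < n" using len by simp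
      show "p!t = bn n!t"
      proof -
        consider "t = 0" | "t = 1" | "t = n - 1" | "2 \<le> t \<and> t < n - 1" using t by linarith
        thus ?thesis
        proof cases
          case 1 thus ?thesis using bn_nth[OF n4 t] aeq a_def by simp
        next
          case 2 thus ?thesis using bn_nth[OF n4 t] p11 by simp
        next
          case 3 thus ?thesis using bn_nth[OF n4 t] y2 y2n n4 by simp
        next
          case 4 thus ?thesis using bn_nth[OF n4 t] val[of t] by simp
        qed
      qed
    qed
    thus ?thesis by simp
  qed
qed


lemma Fish_eq:
  assumes n4: "n \<ge> 4"
  shows "Fish n [[3,2,1], [1,4,2,3], [3,1,2,4]] = Lg n \<union> {an n, bn n}"
proof
  show "Fish n [[3,2,1], [1,4,2,3], [3,1,2,4]] \<subseteq> Lg n \<union> {an n, bn n}"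
  proof
    fix p assume "p \<in> Fish n [[3,2,1], [1,4,2,3], [3,1,2,4]]"
    hence pm: "is_perm n p" and fb: "fishburn p" and a1: "\<not> contains p [3,2,1]"
      and a2: "\<not> contains p [1,4,2,3]" and a3: "\<not> contains p [3,1,2,4]"
      by (auto simp: Fish_def avoids_def)
    have len: "length p = n" and dist: "distinct p" and st: "set p = {1..n}" using pm by (auto simp: is_perm_def)
    show "p \<in> Lg n \<union> {an n, bn n}"
    proof (cases "contains p [3,1,2]")
      case True
      then obtain i j k where h: "i<j" "j<k" "k<length p" "p!j < p!k" "p!k < p!i" unfolding c312 by blast
      have "p = an n \<or> p = bn n" using K2[OF len dist st fb a1 a2 a3 h(1,2)] h len by simp
      thus ?thesis by blast
    next
      case False
      have V: "\<And>t. t < n \<Longrightarrow> 1 \<le> p!t" using st len nth_mem by fastforce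
      have "\<forall>t<n. Gat p t"
        by (rule K1[OF len dist st fb a1 False, of 0]) (use V in force)+
      thus ?thesis using len by (auto simp: Lg_def)
    qed
  qed
next
  show "Lg n \<union> {an n, bn n} \<subseteq> Fish n [[3,2,1], [1,4,2,3], [3,1,2,4]]"
  proof
    fix p assume "p \<in> Lg n \<union> {an n, bn n}"
    thus "p \<in> Fish n [[3,2,1], [1,4,2,3], [3,1,2,4]]"
    proof (elim UnE)
      assume "p \<in> Lg n"
      thus ?thesis using Lg_perm[of p n] Lg_good[of p n] by (auto simp: Fish_def avoids_def)
    next
      assume "p \<in> {an n, bn n}"
      thus ?thesis using an_good[OF n4] bn_good[OF n4] by (auto simp: Fish_def avoids_def)
    qed
  qed
qed

theorem mainTheorem13:
  fixes n :: nat
  assumes "n \<ge> 4"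
  shows "card (Fish n [[3,2,1], [1,4,2,3], [3,1,2,4]]) = F n + 2"
proof -
  have fin: "finite (Lg n)" and c: "card (Lg n) = F n" using Lg_card by auto
  have "an n \<notin> Lg n"
  proof
    assume "an n \<in> Lg n"
    hence "Gat (an n) 0" using assms by (auto simp: Lg_def)
    thus False using an_nth[of 0 n] assms by (auto simp: Gat_def)
  qed
  moreover have "bn n \<notin> Lg n"
  proof
    assume "bn n \<in> Lg n"
    hence "Gat (bn n) 0" using assms by (auto simp: Lg_def)
    thus False using bn_nth[OF assms, of 0] assms by (auto simp: Gat_def)
  qed
  moreover have "an n \<noteq> bn n" using assms by (auto simp: an_def bn_def)
  ultimately have "card (Lg n \<union> {an n, bn n}) = card (Lg n) + 2" using fin by simp
  thus ?thesis using Fish_eq[OF assms] c by simp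
qed

end
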